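(* Let $f$ be an additive function from the positive integers to the nonnegative integers with $f(p)\ge1$ for every prime $p$. Every positive integer is $f$-practical if and only if $f(p^k)\le 1+\sum_{i=0}^{k-1}f(p^i)$ for every prime $p$ and every positive integer $k$.
   Context: $f$ additive means $f(ab)=f(a)+f(b)$ whenever $\gcd(a,b)=1$ (so $f(1)=0$). $S_f(n)=\sum_{d\mid n}f(d)$. A positive integer $n$ is $f$-practical if every positive integer $m\le S_f(n)$ equals $\sum_{d\in\mathcal{D}}f(d)$ for some set $\mathcal{D}$ of distinct divisors of $n$. *)

theory Defs
  imports "HOL-Computational_Algebra.Primes"
begin

definition additive :: "(nat \<Rightarrow> nat) \<Rightarrow> bool" where
  "additive f \<longleftrightarrow> (\<forall>a b. a > 0 \<longrightarrow> b > 0 \<longrightarrow> coprime a b \<longrightarrow> f (a * b) = f a + f b)"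

definition S_f :: "(nat \<Rightarrow> nat) \<Rightarrow> nat \<Rightarrow> nat" where
  "S_f f n = (\<Sum>d | d dvd n. f d)"

definition f_practical :: "(nat \<Rightarrow> nat) \<Rightarrow> nat \<Rightarrow> bool" where
  "f_practical f n \<longleftrightarrow> (\<forall>m. 0 < m \<and> m \<le> S_f f n \<longrightarrow>
      (\<exists>D. D \<subseteq> {d. d dvd n} \<and> m = (\<Sum>d\<in>D. f d)))"

end

theory Submission
  imports Defs
begin

definition complete_set :: "(nat \<Rightarrow> nat) \<Rightarrow> nat set \<Rightarrow> bool" where
  "complete_set f A \<longleftrightarrow> (\<forall>m. m \<le> sum f A \<longrightarrow> (\<exists>D. D \<subseteq> A \<and> m = sum f D))"

lemma complete_insert:
  assumes "finite A" "x \<notin> A" "complete_set f A" "f x \<le> 1 + sum f A"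
  shows "complete_set f (insert x A)"
  unfolding complete_set_def
proof (intro allI impI)
  fix m assume m: "m \<le> sum f (insert x A)"
  have sI: "sum f (insert x A) = f x + sum f A" using assms(1,2) by simp
  show "\<exists>D. D \<subseteq> insert x A \<and> m = sum f D"
  proof (cases "m \<le> sum f A")
    case True
    then obtain D where "D \<subseteq> A" "m = sum f D" using assms(3) unfolding complete_set_def by blast
    then show ?thesis by blast
  next
    case False
    then have "m - f x \<le> sum f A" using m sI by linarith
    then obtain D where D: "D \<subseteq> A" "m - f x = sum f D" using assms(3) unfolding complete_set_def by blast
    have fD: "finite D" using D(1) assms(1) finite_subset by blast
    have "x \<notin> D" using D(1) assms(2) by blast
    then have "sum f (insert x D) = f x + sum f D" using fD by simp
    moreover have "f x \<le> m" using False assms(4) by linarith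
    ultimately have "m = sum f (insert x D)" using D(2) by linarith
    moreover have "insert x D \<subseteq> insert x A" using D(1) by blast
    ultimately show ?thesis by blast
  qed
qed

lemma complete_union:
  assumes "finite B" "finite A" "A \<inter> B = {}" "complete_set f A"
    "\<forall>x\<in>B. f x \<le> 1 + sum f A"
  shows "complete_set f (A \<union> B)"
  using assms
proof (induction B rule: finite_induct)
  case empty
  then show ?case by simp
next
  case (insert x B)
  have c: "complete_set f (A \<union> B)" using insert by blast
  have "sum f A \<le> sum f (A \<union> B)" using insert.hyps(1) insert.prems(1)
    by (intro sum_mono2) auto
  then have "f x \<le> 1 + sum f (A \<union> B)" using insert.prems(4) by force
  moreover have "x \<notin> A \<union> B" using insert.hyps(2) insert.prems(2) by blast
  ultimately have "complete_set f (insert x (A \<union> B))"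
    using complete_insert[OF _ _ c] insert.hyps(1) insert.prems(1) by blast
  then show ?case by simp
qed

lemma f_one:
  assumes "additive f" shows "f 1 = 0"
  using assms unfolding additive_def by (metis coprime_1_left mult_1 less_numeral_extra(1) add_cancel_right_right)

lemma div_set_step:
  fixes m p j :: nat
  assumes "prime p" "\<not> p dvd m" "m > 0"
  shows "{d. d dvd m * p^Suc j} = {d. d dvd m * p^j} \<union> (\<lambda>d. d * p^Suc j) ` {d. d dvd m}"
proof
  show "{d. d dvd m * p^Suc j} \<subseteq> {d. d dvd m * p^j} \<union> (\<lambda>d. d * p^Suc j) ` {d. d dvd m}"
  proof
    fix d assume "d \<in> {d. d dvd m * p^Suc j}"
    then have "d dvd m * p^Suc j" by simp
    then obtain x y where xy: "d = x * y" "x dvd m" "y dvd p^Suc j" by (rule dvd_productE)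
    then obtain i where i: "i \<le> Suc j" "y = p^i" using divides_primepow_nat[OF assms(1)] by blast
    show "d \<in> {d. d dvd m * p^j} \<union> (\<lambda>d. d * p^Suc j) ` {d. d dvd m}"
    proof (cases "i = Suc j")
      case True
      then show ?thesis using xy i by auto
    next
      case False
      then have "i \<le> j" using i by simp
      then have "y dvd p^j" using i by (simp add: le_imp_power_dvd)
      then have "d dvd m * p^j" using xy by (simp add: mult_dvd_mono)
      then show ?thesis by simp
    qed
  qed
next
  show "{d. d dvd m * p^j} \<union> (\<lambda>d. d * p^Suc j) ` {d. d dvd m} \<subseteq> {d. d dvd m * p^Suc j}"
  proof
    fix x assume "x \<in> {d. d dvd m * p^j} \<union> (\<lambda>d. d * p^Suc j) ` {d. d dvd m}"
    moreover have "m * p^j dvd m * p^Suc j" by (simp add: mult_dvd_mono)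
    ultimately show "x \<in> {d. d dvd m * p^Suc j}"
      by (auto intro: dvd_trans mult_dvd_mono)
  qed
qed

lemma complete_step:
  fixes f :: "nat \<Rightarrow> nat"
  assumes add: "additive f" and p: "prime p" and pm: "\<not> p dvd m" and m0: "m > 0"
    and cm: "complete_set f {d. d dvd m}"
    and cond: "\<forall>k. k > 0 \<longrightarrow> f (p ^ k) \<le> 1 + (\<Sum>i<k. f (p ^ i))"
  shows "complete_set f {d. d dvd m * p^j} \<and> (\<Sum>i\<le>j. f (p^i)) + sum f {d. d dvd m} \<le> sum f {d. d dvd m * p^j}"
proof (induction j)
  case 0
  then show ?case using cm f_one[OF add] by simp
next
  case (Suc j)
  have p1: "p > 1" using p prime_gt_1_nat by blast
  have mp0: "m * p^j > 0" using m0 p1 by simp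
  let ?A = "{d. d dvd m * p^j}"
  let ?B = "(\<lambda>d. d * p^Suc j) ` {d. d dvd m}"
  have fA: "finite ?A" using finite_divisors_nat[OF mp0] by simp
  have fM: "finite {d. d dvd m}" using finite_divisors_nat[OF m0] by simp
  have fB: "finite ?B" using fM by simp
  have disj: "?A \<inter> ?B = {}"
  proof (rule ccontr)
    assume "?A \<inter> ?B \<noteq> {}"
    then obtain d where d: "d dvd m" "d * p^Suc j dvd m * p^j" by blast
    then have "(d * p) * p^j dvd m * p^j" by (simp add: mult.assoc mult.commute mult.left_commute)
    then have "d * p dvd m" using p1 by (simp add: dvd_mult_cancel2 )
    then show False using pm by (meson dvd_mult_right)
  qed
  have bound: "\<forall>x\<in>?B. f x \<le> 1 + sum f ?A"
  proof
    fix x assume "x \<in> ?B"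
    then obtain d where d: "d dvd m" "x = d * p^Suc j" by auto
    have d0: "d > 0" using d(1) m0 by (metis dvd_0_left_iff gr0I)
    have "coprime d p" using d(1) pm p by (meson coprime_commute dvd_trans prime_imp_coprime)
    then have cop: "coprime d (p^Suc j)" by simp
    have "f x = f d + f (p^Suc j)" using add cop d0 p1 d(2) unfolding additive_def by simp
    moreover have "f d \<le> sum f {d. d dvd m}" using fM d(1) by (intro member_le_sum) auto
    moreover have "f (p^Suc j) \<le> 1 + (\<Sum>i<Suc j. f (p ^ i))" using cond by blast
    moreover have "(\<Sum>i<Suc j. f (p ^ i)) = (\<Sum>i\<le>j. f (p ^ i))" using lessThan_Suc_atMost by simp
    ultimately show "f x \<le> 1 + sum f ?A" using Suc.IH by linarith
  qed
  have c: "complete_set f (?A \<union> ?B)" using complete_union[OF fB fA disj _ bound] Suc.IH by blast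
  have eq: "{d. d dvd m * p^Suc j} = ?A \<union> ?B" using div_set_step[OF p pm m0] .
  have "sum f (?A \<union> ?B) = sum f ?A + sum f ?B" using sum.union_disjoint[OF fA fB disj] .
  moreover have "p^Suc j \<in> ?B" by force
  then have "f (p^Suc j) \<le> sum f ?B" using fB by (intro member_le_sum) auto
  ultimately have "(\<Sum>i\<le>Suc j. f (p^i)) + sum f {d. d dvd m} \<le> sum f (?A \<union> ?B)"
    using Suc.IH by simp
  then show ?case using c eq by simp
qed

lemma all_complete:
  fixes f :: "nat \<Rightarrow> nat"
  assumes add: "additive f"
    and cond: "\<forall>p k. prime p \<longrightarrow> k > 0 \<longrightarrow> f (p ^ k) \<le> 1 + (\<Sum>i<k. f (p ^ i))"
  shows "n > 0 \<Longrightarrow> complete_set f {d. d dvd n}"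
proof (induction n rule: less_induct)
  case (less n)
  show ?case
  proof (cases "n = 1")
    case True
    then show ?thesis using f_one[OF add] unfolding complete_set_def by auto
  next
    case False
    then obtain p where p: "prime p" "p dvd n" using less.prems
      by (metis prime_factor_nat)
    define k where "k = multiplicity p n"
    obtain m where m: "n = p^k * m" "\<not> p dvd m"
      using multiplicity_decompose'[of n p] k_def less.prems p(1)
      by (metis not_prime_unit not_gr0)
    have k0: "k > 0" using p less.prems k_def multiplicity_gt_zero_iff[of n p] not_prime_unit[of p] prime_gt_1_nat[of p] by auto
    have m0: "m > 0" using m less.prems by (metis gr0I mult_0_right)
    have p1: "p > 1" using p prime_gt_1_nat by blast
    have "p^k > 1" using p1 k0 by (metis one_less_power)
    then have "m < n" using m m0 by simp
    then have cm: "complete_set f {d. d dvd m}" using less.IH m0 by blast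
    have "complete_set f {d. d dvd m * p^k}"
      using complete_step[OF add p(1) m(2) m0 cm] cond p(1) by blast
    then show ?thesis using m by (simp add: mult.commute)
  qed
qed

lemma pp_divs:
  assumes "prime (p::nat)"
  shows "{d. d dvd p^k} = (\<lambda>i. p^i) ` {..k}"
  using divides_primepow_nat[OF assms] by auto

lemma inj_pow:
  assumes "prime (p::nat)" shows "inj_on (\<lambda>i. p^i) A"
  using assms prime_gt_1_nat by (auto simp: inj_on_def power_inject_exp)

theorem corollary6p2:
  fixes f :: "nat \<Rightarrow> nat"
  assumes "additive f"
    and "\<And>p. prime p \<Longrightarrow> f p \<ge> 1"
  shows "(\<forall>n. n > 0 \<longrightarrow> f_practical f n) \<longleftrightarrow>
         (\<forall>p k. prime p \<longrightarrow> k > 0 \<longrightarrow> f (p ^ k) \<le> 1 + (\<Sum>i<k. f (p ^ i)))"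
proof
  assume H: "\<forall>n. n > 0 \<longrightarrow> f_practical f n"
  show "\<forall>p k. prime p \<longrightarrow> k > 0 \<longrightarrow> f (p ^ k) \<le> 1 + (\<Sum>i<k. f (p ^ i))"
  proof (intro allI impI)
    fix p k :: nat assume p: "prime p" and k: "k > 0"
    show "f (p ^ k) \<le> 1 + (\<Sum>i<k. f (p ^ i))"
    proof (rule ccontr)
      assume c: "\<not> ?thesis"
      have pk0: "p^k > 0" using p prime_gt_0_nat by simp
      have S: "S_f f (p^k) = (\<Sum>i\<le>k. f (p^i))"
        unfolding S_f_def pp_divs[OF p] using sum.reindex[OF inj_pow[OF p], of f "{..k}"] by (simp add: comp_def)
      have S2: "(\<Sum>i\<le>k. f (p^i)) = (\<Sum>i<k. f (p^i)) + f (p^k)"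
        by (simp add: lessThan_Suc_atMost[symmetric])
      define m where "m = 1 + (\<Sum>i<k. f (p ^ i))"
      have "0 < m \<and> m \<le> S_f f (p^k)" using S S2 c m_def by simp
      then obtain D where D: "D \<subseteq> {d. d dvd p^k}" "m = sum f D"
        using H pk0 unfolding f_practical_def by blast
      have fD: "finite D" using D(1) finite_divisors_nat[OF pk0] finite_subset by blast
      show False
      proof (cases "p^k \<in> D")
        case True
        then have "f (p^k) \<le> sum f D" using fD by (intro member_le_sum) auto
        then show False using D c m_def by simp
      next
        case False
        have "D \<subseteq> (\<lambda>i. p^i) ` {..<k}"
        proof
          fix d assume "d \<in> D"
          then obtain i where "i \<le> k" "d = p^i" using D(1) pp_divs[OF p] by auto
          then show "d \<in> (\<lambda>i. p^i) ` {..<k}" using False \<open>d \<in> D\<close> by (cases "i = k") auto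
        qed
        then have "sum f D \<le> sum f ((\<lambda>i. p^i) ` {..<k})" by (intro sum_mono2) auto
        also have "\<dots> = (\<Sum>i<k. f (p^i))"
          using sum.reindex[OF inj_pow[OF p], of f "{..<k}"] by (simp add: comp_def)
        finally show False using D m_def by simp
      qed
    qed
  qed
next
  assume C: "\<forall>p k. prime p \<longrightarrow> k > 0 \<longrightarrow> f (p ^ k) \<le> 1 + (\<Sum>i<k. f (p ^ i))"
  show "\<forall>n. n > 0 \<longrightarrow> f_practical f n"
  proof (intro allI impI)
    fix n :: nat assume "n > 0"
    then have "complete_set f {d. d dvd n}" using all_complete[OF assms(1) C] by blast
    then show "f_practical f n" unfolding f_practical_def complete_set_def S_f_def by blast
  qed
qed

end
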